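(* Let $0\leq k'\leq k$ and $0\leq \ell'\leq \ell$. Set $\mathcal{A}= \mathbb{C}\langle X_1,\ldots,X_k,Y_1,\ldots,Y_{\ell}\rangle$, $\mathcal{A}_1=\mathbb{C}\langle X_1,\ldots,X_k\rangle$, $\mathcal{A}_2=\mathbb{C}\langle Y_1,\ldots,Y_{\ell}\rangle$; let $\mathcal{I}_1$ be the ideal of $\mathcal{A}_1$ generated by $X_1,\ldots,X_{k'}$, $\mathcal{I}_2$ the ideal of $\mathcal{A}_2$ generated by $Y_1,\ldots,Y_{\ell'}$, and $\mathcal{I}$ the ideal of $\mathcal{A}$ generated by $\mathcal{I}_1\cup \mathcal{I}_2$. Let $\tau:\mathcal{A}\to\mathbb{C}$ be a unital linear functional and $\tau':\mathcal{A}\to\mathbb{C}$ a linear functional with $\tau'(1)=0$, such that $\mathcal{I}\subset \ker(\tau)$ and $\mathbb{C}\langle X_{k'+1},\ldots,X_k,Y_{\ell'+1},\ldots,Y_{\ell}\rangle\subset \ker(\tau')$. Assume that $(\mathcal{A}_1,\mathcal{I}\cap \mathcal{A}_1)$ and $(\mathcal{A}_2,\mathcal{I}\cap \mathcal{A}_2)$ are free of type $B$ in $(\mathcal{A},\tau,\mathcal{I},\tau'|_{\mathcal{I}})$. Then $\mathcal{A}_1$ and $\mathcal{A}_2$ are infinitesimally free with respect to $(\tau,\tau')$.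
   Context: Freeness of type $B$: for a unital linear functional $\tau$ on a unital algebra $\mathcal{A}$, an ideal $\mathcal{I}$ and a linear $\tau':\mathcal{I}\to\mathbb{C}$, and unital subalgebras $\mathcal{A}_1,\mathcal{A}_2$ with subspaces $V_h\subset\mathcal{I}\cap\mathcal{A}_h$ stable under two-sided multiplication by $\mathcal{A}_h$, $(\mathcal{A}_1,V_1)$ and $(\mathcal{A}_2,V_2)$ are free of type $B$ if $\mathcal{A}_1,\mathcal{A}_2$ are free w.r.t. $\tau$ and whenever $a_n\in\mathcal{A}_{i_n},\dots,a_1\in\mathcal{A}_{i_1}$, $v\in V_h$, $b_1\in\mathcal{A}_{j_1},\dots,b_m\in\mathcal{A}_{j_m}$ with consecutive indices in $i_n,\dots,i_1,h,j_1,\dots,j_m$ all different and all $a_r,b_s$ centered for $\tau$, one has $\tau'(a_n\cdots a_1vb_1\cdots b_m)=\tau(a_nb_m)\cdots\tau(a_1b_1)\tau'(v)$ if $n=m$ and $i_r=j_r$ for all $r$, and $0$ otherwise. Infinitesimal freeness w.r.t. $(\tau,\tau')$: whenever $a_j\in\mathcal{A}_{i_j}$ with consecutive indices different and $\tau(a_j)=0$ for all $j$, $\tau(a_1\cdots a_n)=0$ and $\tau'(a_1\cdots a_n)=\sum_{j=1}^n\tau(a_1\cdots a_{j-1}\tau'(a_j)a_{j+1}\cdots a_n)$. *)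

theory Defs
  imports Complex_Main
begin

text \<open>Generators: \<open>Inl i\<close> stands for X_(i+1), \<open>Inr j\<close> stands for Y_(j+1).
  A noncommutative polynomial is a finitely supported coefficient function on words.\<close>

type_synonym gen = "nat + nat"
type_synonym word = "gen list"
type_synonym ncp = "word \<Rightarrow> complex"

definition pzero :: ncp where "pzero = (\<lambda>w. 0)"
definition pone :: ncp where "pone = (\<lambda>w. if w = [] then 1 else 0)"
definition padd :: "ncp \<Rightarrow> ncp \<Rightarrow> ncp" where "padd p q = (\<lambda>w. p w + q w)"
definition psmult :: "complex \<Rightarrow> ncp \<Rightarrow> ncp" where "psmult c p = (\<lambda>w. c * p w)"

text \<open>Product in the free algebra: concatenation of words, extended bilinearly.\<close>
definition pmul :: "ncp \<Rightarrow> ncp \<Rightarrow> ncp" where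
  "pmul p q = (\<lambda>w. \<Sum>i\<le>length w. p (take i w) * q (drop i w))"

definition pprod :: "ncp list \<Rightarrow> ncp" where
  "pprod xs = foldr pmul xs pone"

text \<open>The unital subalgebra \<open>\<complex>\<langle>S\<rangle>\<close> generated by a set of generators S.\<close>
definition polys :: "gen set \<Rightarrow> ncp set" where
  "polys S = {p. finite {w. p w \<noteq> 0} \<and> (\<forall>w. p w \<noteq> 0 \<longrightarrow> set w \<subseteq> S)}"

definition is_ideal :: "ncp set \<Rightarrow> ncp set \<Rightarrow> bool" where
  "is_ideal B J \<longleftrightarrow> J \<subseteq> B \<and> pzero \<in> J \<and> (\<forall>p\<in>J. \<forall>q\<in>J. padd p q \<in> J) \<and>
     (\<forall>c. \<forall>p\<in>J. psmult c p \<in> J) \<and>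
     (\<forall>a\<in>B. \<forall>p\<in>J. pmul a p \<in> J \<and> pmul p a \<in> J)"

definition gen_ideal :: "ncp set \<Rightarrow> ncp set \<Rightarrow> ncp set" where
  "gen_ideal B S = \<Inter> {J. S \<subseteq> J \<and> is_ideal B J}"

definition var :: "gen \<Rightarrow> ncp" where
  "var g = (\<lambda>w. if w = [g] then 1 else 0)"

text \<open>A linear functional on the free algebra is determined by its values on words
  (its moments) t; \<open>lin t\<close> is its linear extension.\<close>
definition lin :: "(word \<Rightarrow> complex) \<Rightarrow> ncp \<Rightarrow> complex" where
  "lin t p = (\<Sum>w\<in>{w. p w \<noteq> 0}. p w * t w)"

definition alternating :: "'i list \<Rightarrow> bool" where
  "alternating idx \<longleftrightarrow> (\<forall>j. Suc j < length idx \<longrightarrow> idx ! j \<noteq> idx ! Suc j)"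

definition free_wrt :: "(ncp \<Rightarrow> complex) \<Rightarrow> ('i \<Rightarrow> ncp set) \<Rightarrow> 'i set \<Rightarrow> bool" where
  "free_wrt tau Alg Ix \<longleftrightarrow>
    (\<forall>as idx. as \<noteq> [] \<and> length idx = length as \<and> set idx \<subseteq> Ix \<and> alternating idx \<and>
       (\<forall>j<length as. as ! j \<in> Alg (idx ! j) \<and> tau (as ! j) = 0)
       \<longrightarrow> tau (pprod as) = 0)"

text \<open>The lists \<open>as = [a_1,...,a_n]\<close>
  with indices \<open>ia = [i_1,...,i_n]\<close> and \<open>bs = [b_1,...,b_m]\<close> with indices
  \<open>ib = [j_1,...,j_m]\<close>; the product is \<open>a_n \<cdots> a_1 v b_1 \<cdots> b_m\<close>.\<close>
definition free_typeB ::
  "(ncp \<Rightarrow> complex) \<Rightarrow> (ncp \<Rightarrow> complex) \<Rightarrow> ('i \<Rightarrow> ncp set) \<Rightarrow> ('i \<Rightarrow> ncp set) \<Rightarrow> 'i set \<Rightarrow> bool" where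
  "free_typeB tau tau' Alg V Ix \<longleftrightarrow> free_wrt tau Alg Ix \<and>
    (\<forall>as ia bs ib h v.
       length ia = length as \<and> length ib = length bs \<and> set ia \<subseteq> Ix \<and> set ib \<subseteq> Ix \<and>
       h \<in> Ix \<and> v \<in> V h \<and> alternating (rev ia @ [h] @ ib) \<and>
       (\<forall>r<length as. as ! r \<in> Alg (ia ! r) \<and> tau (as ! r) = 0) \<and>
       (\<forall>s<length bs. bs ! s \<in> Alg (ib ! s) \<and> tau (bs ! s) = 0)
       \<longrightarrow> tau' (pmul (pprod (rev as)) (pmul v (pprod bs))) =
           (if length as = length bs \<and> ia = ib
            then (\<Prod>r<length as. tau (pmul (as ! r) (bs ! r))) * tau' v
            else 0))"

definition inf_free :: "(ncp \<Rightarrow> complex) \<Rightarrow> (ncp \<Rightarrow> complex) \<Rightarrow> ('i \<Rightarrow> ncp set) \<Rightarrow> 'i set \<Rightarrow> bool" where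
  "inf_free tau tau' Alg Ix \<longleftrightarrow>
    (\<forall>as idx. as \<noteq> [] \<and> length idx = length as \<and> set idx \<subseteq> Ix \<and> alternating idx \<and>
       (\<forall>j<length as. as ! j \<in> Alg (idx ! j) \<and> tau (as ! j) = 0)
       \<longrightarrow> tau (pprod as) = 0 \<and>
           tau' (pprod as) =
             (\<Sum>j<length as. tau (pprod (as[j := psmult (tau' (as ! j)) pone]))))"

end

theory Submission
  imports Defs
begin


definition splits :: "word \<Rightarrow> (word \<times> word) set" where
  "splits w = {(u,v). u @ v = w}"

lemma splits_eq: "splits w = (\<lambda>i. (take i w, drop i w)) ` {..length w}"
proof
  show "splits w \<subseteq> (\<lambda>i. (take i w, drop i w)) ` {..length w}"
  proof
    fix uv assume "uv \<in> splits w"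
    then obtain u v where uv: "uv = (u,v)" "u @ v = w" by (auto simp: splits_def)
    then have "uv = (take (length u) w, drop (length u) w)" "length u \<in> {..length w}" by auto
    then show "uv \<in> (\<lambda>i. (take i w, drop i w)) ` {..length w}" by blast
  qed
  show "(\<lambda>i. (take i w, drop i w)) ` {..length w} \<subseteq> splits w"
    by (auto simp: splits_def)
qed

lemma finite_splits[simp]: "finite (splits w)"
  unfolding splits_eq by simp

lemma inj_take_drop: "inj_on (\<lambda>i. (take i w, drop i w)) {..length w}"
proof (rule inj_onI)
  fix i j assume "i \<in> {..length w}" "j \<in> {..length w}" "(take i w, drop i w) = (take j w, drop j w)"
  then have "length (take i w) = length (take j w)" by simp
  with \<open>i \<in> _\<close> \<open>j \<in> _\<close> show "i = j" by (simp add: min_def split: if_splits)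
qed

lemma pmul_splits: "pmul p q w = (\<Sum>uv\<in>splits w. p (fst uv) * q (snd uv))"
  unfolding pmul_def splits_eq by (simp add: sum.reindex[OF inj_take_drop])

lemma sum_sum_Sigma: "finite A \<Longrightarrow> (\<And>a. a\<in>A \<Longrightarrow> finite (B a)) \<Longrightarrow>
   (\<Sum>a\<in>A. \<Sum>b\<in>B a. f a b) = (\<Sum>z\<in>Sigma A B. f (fst z) (snd z))"
  by (subst sum.Sigma) (auto simp: split_beta)

definition triples :: "word \<Rightarrow> (word \<times> word \<times> word) set" where
  "triples w = {(x,y,v). x @ y @ v = w}"

lemma pmul_assoc: "pmul (pmul p q) r = pmul p (pmul q r)"
proof
  fix w
  have "pmul (pmul p q) r w = (\<Sum>uv\<in>splits w. (\<Sum>xy\<in>splits (fst uv). p (fst xy) * q (snd xy)) * r (snd uv))"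
    by (simp add: pmul_splits)
  also have "\<dots> = (\<Sum>uv\<in>splits w. (\<Sum>xy\<in>splits (fst uv). p (fst xy) * q (snd xy) * r (snd uv)))"
    by (simp add: sum_distrib_right)
  also have "\<dots> = (\<Sum>z\<in>Sigma (splits w) (\<lambda>uv. splits (fst uv)). p (fst (snd z)) * q (snd (snd z)) * r (snd (fst z)))"
    by (rule sum_sum_Sigma) auto
  also have "\<dots> = (\<Sum>t\<in>triples w. p (fst t) * q (fst (snd t)) * r (snd (snd t)))"
    apply (rule sum.reindex_bij_witness[where i = "\<lambda>(x,y,v). ((x@y,v),(x,y))" and j = "\<lambda>((u,v),(x,y)). (x,y,v)"])
    apply (auto simp: splits_def triples_def)
    done
  also have "\<dots> = (\<Sum>z\<in>Sigma (splits w) (\<lambda>xz. splits (snd xz)). p (fst (fst z)) * (q (fst (snd z)) * r (snd (snd z))))"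
    apply (rule sum.reindex_bij_witness[where j = "\<lambda>(x,y,v). ((x,y@v),(y,v))" and i = "\<lambda>((x,z),(y,v)). (x,y,v)"])
    apply (auto simp: splits_def triples_def)
    done
  also have "\<dots> = (\<Sum>xz\<in>splits w. (\<Sum>yv\<in>splits (snd xz). p (fst xz) * (q (fst yv) * r (snd yv))))"
    by (rule sum_sum_Sigma[symmetric]) auto
  also have "\<dots> = pmul p (pmul q r) w"
    by (simp add: pmul_splits sum_distrib_left)
  finally show "pmul (pmul p q) r w = pmul p (pmul q r) w" .
qed

lemma pmul_padd_left: "pmul (padd p q) r = padd (pmul p r) (pmul q r)"
  by (auto simp: pmul_def padd_def fun_eq_iff distrib_right sum.distrib)
lemma pmul_padd_right: "pmul r (padd p q) = padd (pmul r p) (pmul r q)"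
  by (auto simp: pmul_def padd_def fun_eq_iff distrib_left sum.distrib)
lemma pmul_psmult_left: "pmul (psmult c p) r = psmult c (pmul p r)"
  by (auto simp: pmul_def psmult_def fun_eq_iff sum_distrib_left mult.assoc)
lemma pmul_psmult_right: "pmul r (psmult c p) = psmult c (pmul r p)"
  by (auto simp: pmul_def psmult_def fun_eq_iff sum_distrib_left mult.left_commute)
lemma pmul_pone_left[simp]: "pmul pone p = p"
proof
  fix w show "pmul pone p w = p w"
  proof (cases w)
    case Nil then show ?thesis by (simp add: pmul_def pone_def)
  next
    case (Cons a u)
    then show ?thesis unfolding pmul_def pone_def
      by (simp only: length_Cons sum.atMost_Suc_shift) simp
  qed
qed
lemma pmul_pone_right[simp]: "pmul p pone = p"
proof
  fix w show "pmul p pone w = p w"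
  proof (cases "length w")
    case 0 then show ?thesis by (simp add: pmul_def pone_def)
  next
    case (Suc n)
    have "(\<Sum>i\<le>n. p (take i w) * (if drop i w = [] then 1 else 0)) = 0"
      by (rule sum.neutral) (use Suc in auto)
    then show ?thesis unfolding pmul_def pone_def Suc
      by (simp only: sum.atMost_Suc) (simp add: Suc[symmetric])
  qed
qed

lemma pprod_Nil[simp]: "pprod [] = pone" and pprod_Cons[simp]: "pprod (x # xs) = pmul x (pprod xs)"
  by (auto simp: pprod_def)

lemma pprod_append: "pprod (xs @ ys) = pmul (pprod xs) (pprod ys)"
  by (induction xs) (auto simp: pmul_assoc)

lemma pprod_upd_padd: "j < length xs \<Longrightarrow>
  pprod (xs[j := padd u v]) = padd (pprod (xs[j := u])) (pprod (xs[j := v]))"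
  by (induction xs arbitrary: j) (auto split: nat.splits simp: pmul_padd_left pmul_padd_right)

lemma pprod_upd_psmult: "j < length xs \<Longrightarrow>
  pprod (xs[j := psmult c u]) = psmult c (pprod (xs[j := u]))"
  by (induction xs arbitrary: j) (auto split: nat.splits simp: pmul_psmult_left pmul_psmult_right)

lemma pprod_upd_pone: "j < length xs \<Longrightarrow> pprod (xs[j := pone]) = pprod (take j xs @ drop (Suc j) xs)"
  by (induction xs arbitrary: j) (auto split: nat.splits)




definition supp :: "ncp \<Rightarrow> word set" where "supp p = {w. p w \<noteq> 0}"

lemma polys_iff: "p \<in> polys S \<longleftrightarrow> finite (supp p) \<and> (\<forall>w\<in>supp p. set w \<subseteq> S)"
  by (auto simp: polys_def supp_def)

lemma polys_finite: "p \<in> polys S \<Longrightarrow> finite (supp p)"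
  by (simp add: polys_iff)

lemma polys_pone[simp]: "pone \<in> polys S"
  by (auto simp: polys_iff supp_def pone_def)
lemma polys_pzero[simp]: "pzero \<in> polys S"
  by (auto simp: polys_iff supp_def pzero_def)
lemma polys_var: "g \<in> S \<Longrightarrow> var g \<in> polys S"
  by (auto simp: polys_iff supp_def var_def)
lemma polys_mono: "S \<subseteq> T \<Longrightarrow> polys S \<subseteq> polys T"
proof (rule subsetI)
  fix p assume "S \<subseteq> T" "p \<in> polys S"
  then show "p \<in> polys T" unfolding polys_iff by blast
qed

lemma supp_padd: "supp (padd p q) \<subseteq> supp p \<union> supp q"
  by (auto simp: supp_def padd_def)
lemma supp_psmult: "supp (psmult c p) \<subseteq> supp p"
  by (auto simp: supp_def psmult_def)

lemma polys_padd: "p \<in> polys S \<Longrightarrow> q \<in> polys S \<Longrightarrow> padd p q \<in> polys S"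
  using supp_padd[of p q] unfolding polys_iff by (meson Un_iff finite_UnI finite_subset subsetD)
lemma polys_psmult: "p \<in> polys S \<Longrightarrow> psmult c p \<in> polys S"
  using supp_psmult[of c p] unfolding polys_iff by (meson finite_subset subsetD)

lemma supp_pmul: "supp (pmul p q) \<subseteq> (\<lambda>(u,v). u @ v) ` (supp p \<times> supp q)"
proof
  fix w assume "w \<in> supp (pmul p q)"
  then have "(\<Sum>i\<le>length w. p (take i w) * q (drop i w)) \<noteq> 0" by (simp add: supp_def pmul_def)
  then obtain i where "p (take i w) * q (drop i w) \<noteq> 0"
    by (meson sum.neutral)
  then have "(take i w, drop i w) \<in> supp p \<times> supp q" by (simp add: supp_def)
  then show "w \<in> (\<lambda>(u,v). u @ v) ` (supp p \<times> supp q)"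
    by (metis (no_types, lifting) append_take_drop_id case_prod_conv image_eqI)
qed

lemma polys_pmul: "p \<in> polys S \<Longrightarrow> q \<in> polys S \<Longrightarrow> pmul p q \<in> polys S"
proof -
  assume p: "p \<in> polys S" and q: "q \<in> polys S"
  have fin: "finite ((\<lambda>(u,v). u @ v) ` (supp p \<times> supp q))"
    using p q by (simp add: polys_iff)
  have "\<forall>w\<in>supp (pmul p q). set w \<subseteq> S"
    using supp_pmul[of p q] p q unfolding polys_iff by fastforce
  then show ?thesis using finite_subset[OF supp_pmul fin] by (simp add: polys_iff)
qed

lemma polys_pprod: "set xs \<subseteq> polys S \<Longrightarrow> pprod xs \<in> polys S"
  by (induction xs) (auto intro: polys_pmul)

lemma lin_superset: "finite W \<Longrightarrow> supp p \<subseteq> W \<Longrightarrow> lin t p = (\<Sum>w\<in>W. p w * t w)"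
  unfolding lin_def
  by (rule sum.mono_neutral_left) (auto simp: supp_def)

lemma lin_padd: "finite (supp p) \<Longrightarrow> finite (supp q) \<Longrightarrow> lin t (padd p q) = lin t p + lin t q"
proof -
  assume fp: "finite (supp p)" and fq: "finite (supp q)"
  let ?W = "supp p \<union> supp q"
  have "lin t (padd p q) = (\<Sum>w\<in>?W. padd p q w * t w)"
    by (rule lin_superset) (use fp fq supp_padd in auto)
  also have "\<dots> = (\<Sum>w\<in>?W. p w * t w) + (\<Sum>w\<in>?W. q w * t w)"
    by (simp add: padd_def distrib_right sum.distrib)
  also have "\<dots> = lin t p + lin t q"
    using lin_superset[of ?W p t] lin_superset[of ?W q t] fp fq by auto
  finally show ?thesis .
qed

lemma lin_psmult: "finite (supp p) \<Longrightarrow> lin t (psmult c p) = c * lin t p"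
proof -
  assume fp: "finite (supp p)"
  have "lin t (psmult c p) = (\<Sum>w\<in>supp p. psmult c p w * t w)"
    by (rule lin_superset) (use fp supp_psmult in auto)
  also have "\<dots> = c * lin t p"
    by (simp add: psmult_def lin_def supp_def sum_distrib_left mult.assoc)
  finally show ?thesis .
qed

lemma lin_pone: "lin t pone = t []"
proof -
  have "lin t pone = (\<Sum>w\<in>{[]}. pone w * t w)"
    by (rule lin_superset) (auto simp: supp_def pone_def)
  then show ?thesis by (simp add: pone_def)
qed

lemma lin_polys_padd: "p \<in> polys S \<Longrightarrow> q \<in> polys T \<Longrightarrow> lin t (padd p q) = lin t p + lin t q"
  by (simp add: lin_padd polys_finite)

definition closedB :: "ncp set \<Rightarrow> bool" where
  "closedB B \<longleftrightarrow> pzero \<in> B \<and> (\<forall>p\<in>B. \<forall>q\<in>B. padd p q \<in> B \<and> pmul p q \<in> B) \<and> (\<forall>c. \<forall>p\<in>B. psmult c p \<in> B)"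

lemma closedB_polys: "closedB (polys S)"
  unfolding closedB_def using polys_padd polys_pmul polys_psmult polys_pzero by blast

lemma gen_ideal_props:
  assumes "closedB B" "S \<subseteq> B"
  shows "is_ideal B (gen_ideal B S)" "S \<subseteq> gen_ideal B S" "gen_ideal B S \<subseteq> B"
proof -
  have BB: "is_ideal B B" using assms(1) by (simp add: closedB_def is_ideal_def)
  show "S \<subseteq> gen_ideal B S" by (auto simp: gen_ideal_def)
  show "gen_ideal B S \<subseteq> B" using BB assms(2) by (auto simp: gen_ideal_def)
  let ?F = "{J. S \<subseteq> J \<and> is_ideal B J}"
  have mem: "x \<in> gen_ideal B S \<longleftrightarrow> (\<forall>J\<in>?F. x \<in> J)" for x
    by (simp add: gen_ideal_def)
  have sub: "gen_ideal B S \<subseteq> B" using BB assms(2) by (auto simp: gen_ideal_def)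
  have z: "pzero \<in> gen_ideal B S" unfolding mem by (simp add: is_ideal_def)
  have a: "padd p q \<in> gen_ideal B S" if "p \<in> gen_ideal B S" "q \<in> gen_ideal B S" for p q
    using that unfolding mem by (simp add: is_ideal_def)
  have c: "psmult c p \<in> gen_ideal B S" if "p \<in> gen_ideal B S" for c p
    using that unfolding mem by (simp add: is_ideal_def)
  have m: "pmul x p \<in> gen_ideal B S \<and> pmul p x \<in> gen_ideal B S" if "x \<in> B" "p \<in> gen_ideal B S" for x p
    using that unfolding mem by (simp add: is_ideal_def)
  show "is_ideal B (gen_ideal B S)"
    unfolding is_ideal_def using sub z a c m by blast
qed

definition mword :: "word \<Rightarrow> ncp" where "mword w = (\<lambda>x. if x = w then 1 else 0)"

lemma mword_append: "mword (u @ v) = pmul (mword u) (mword v)"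
proof
  fix w
  have "pmul (mword u) (mword v) w = (\<Sum>uv\<in>splits w. mword u (fst uv) * mword v (snd uv))"
    by (simp add: pmul_splits)
  also have "\<dots> = (\<Sum>uv\<in>splits w. if uv = (u,v) then 1 else 0)"
    by (rule sum.cong) (auto simp: mword_def)
  also have "\<dots> = mword (u @ v) w"
    by (simp add: sum.delta[OF finite_splits]) (auto simp: mword_def splits_def)
  finally show "mword (u @ v) w = pmul (mword u) (mword v) w" ..
qed

lemma var_mword: "var g = mword [g]"
  by (simp add: var_def mword_def)

lemma polys_mword_word: "set w \<subseteq> S \<Longrightarrow> mword w \<in> polys S"
  by (auto simp: polys_iff supp_def mword_def)

lemma ideal_contains_aux:
  assumes J: "is_ideal (polys G) J" and H: "var ` H \<subseteq> J"
  shows "finite W \<Longrightarrow> supp q \<subseteq> W \<Longrightarrow> q \<in> polys G \<Longrightarrow> (\<forall>w\<in>supp q. set w \<inter> H \<noteq> {}) \<Longrightarrow> q \<in> J"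
proof (induction W arbitrary: q rule: finite_induct)
  case empty
  then have "q = pzero" by (auto simp: supp_def pzero_def)
  then show ?case using J by (simp add: is_ideal_def)
next
  case (insert w W)
  define q' where "q' = q(w := 0)"
  have sq': "supp q' \<subseteq> supp q" by (auto simp: q'_def supp_def)
  have q': "q' \<in> J"
  proof (rule insert.IH)
    show "supp q' \<subseteq> W" using insert.prems(1) by (auto simp: q'_def supp_def)
    show "q' \<in> polys G" using insert.prems(2) sq' unfolding polys_iff by (meson finite_subset subsetD)
    show "\<forall>w\<in>supp q'. set w \<inter> H \<noteq> {}" using insert.prems(3) sq' by blast
  qed
  have eq: "q = padd q' (psmult (q w) (mword w))"
    by (auto simp: q'_def padd_def psmult_def mword_def)
  have "psmult (q w) (mword w) \<in> J"
  proof (cases "q w = 0")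
    case True
    then have "psmult (q w) (mword w) = pzero" by (auto simp: psmult_def pzero_def)
    then show ?thesis using J by (simp add: is_ideal_def)
  next
    case False
    then have w: "w \<in> supp q" by (simp add: supp_def)
    then have sw: "set w \<subseteq> G" "set w \<inter> H \<noteq> {}" using insert.prems by (auto simp: polys_iff)
    then obtain g where g: "g \<in> set w" "g \<in> H" by auto
    then obtain u v where wuv: "w = u @ g # v" by (meson split_list)
    have "mword w = pmul (mword u) (pmul (var g) (mword v))"
      by (simp add: wuv var_mword mword_append[symmetric])
    moreover have "mword u \<in> polys G" "mword v \<in> polys G"
      using sw wuv by (auto intro!: polys_mword_word)
    moreover have "var g \<in> J" using H g by auto
    ultimately have "mword w \<in> J" using J unfolding is_ideal_def by metis
    then show ?thesis using J by (simp add: is_ideal_def)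
  qed
  then show ?case using q' J eq unfolding is_ideal_def by metis
qed

lemma decompose:
  assumes "a \<in> polys G" "H \<subseteq> G"
  shows "\<exists>p q. a = padd p q \<and> p \<in> polys (G - H) \<and> q \<in> gen_ideal (polys G) (var ` H)"
proof -
  define p where "p = (\<lambda>w. if set w \<inter> H = {} then a w else 0)"
  define q where "q = (\<lambda>w. if set w \<inter> H = {} then 0 else a w)"
  have aeq: "a = padd p q" by (auto simp: p_def q_def padd_def)
  have sp: "supp p \<subseteq> supp a" and sq: "supp q \<subseteq> supp a"
    by (auto simp: p_def q_def supp_def)
  have fa: "finite (supp a)" using assms(1) by (simp add: polys_iff)
  have "\<forall>w\<in>supp p. set w \<subseteq> G - H"
    using assms(1) sp unfolding polys_iff by (auto simp: supp_def p_def split: if_splits)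
  then have "p \<in> polys (G - H)"
    using finite_subset[OF sp fa] by (simp add: polys_iff)
  moreover have "\<forall>w\<in>supp q. set w \<subseteq> G"
    using assms(1) sq unfolding polys_iff by blast
  then have qG: "q \<in> polys G"
    using finite_subset[OF sq fa] by (simp add: polys_iff)
  moreover have "q \<in> gen_ideal (polys G) (var ` H)"
    unfolding gen_ideal_def
  proof (rule InterI, safe)
    fix J assume H: "var ` H \<subseteq> J" and J: "is_ideal (polys G) J"
    show "q \<in> J"
      by (rule ideal_contains_aux[OF J H, of "supp q"])
         (use qG in \<open>auto simp: polys_iff q_def supp_def\<close>)
  qed
  ultimately show ?thesis using aeq by blast
qed




lemma alternating_Cons: "alternating (x # xs) \<longleftrightarrow> (xs = [] \<or> x \<noteq> hd xs) \<and> alternating xs"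
proof
  assume a: "alternating (x # xs)"
  have "alternating xs" unfolding alternating_def
  proof (intro allI impI)
    fix j assume "Suc j < length xs"
    then show "xs ! j \<noteq> xs ! Suc j" using a[unfolded alternating_def, rule_format, of "Suc j"] by simp
  qed
  moreover have "xs = [] \<or> x \<noteq> hd xs"
    using a[unfolded alternating_def, rule_format, of 0] by (cases xs) auto
  ultimately show "(xs = [] \<or> x \<noteq> hd xs) \<and> alternating xs" by blast
next
  assume a: "(xs = [] \<or> x \<noteq> hd xs) \<and> alternating xs"
  show "alternating (x # xs)" unfolding alternating_def
  proof (intro allI impI)
    fix j assume j: "Suc j < length (x # xs)"
    show "(x # xs) ! j \<noteq> (x # xs) ! Suc j"
    proof (cases j)
      case 0 then show ?thesis using a j by (cases xs) auto
    next
      case (Suc i) then show ?thesis using a j by (auto simp: alternating_def)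
    qed
  qed
qed

lemma alternating_succ: "alternating xs \<longleftrightarrow> successively (\<noteq>) xs"
  by (induction xs) (auto simp: alternating_Cons successively_Cons, simp add: alternating_def)

lemma succ_rev: "successively (\<noteq>) (rev xs) \<longleftrightarrow> successively (\<noteq>) xs"
proof -
  have "(\<lambda>x y::'a. y \<noteq> x) = (\<noteq>)" by (auto simp: fun_eq_iff)
  then show ?thesis by (simp only: successively_rev)
qed

lemma succ_parity:
  assumes "successively (\<noteq>) idx" "set idx \<subseteq> {1::nat, 2}" "i < length idx"
  shows "idx ! i = (if even i then idx ! 0 else 3 - idx ! 0)"
  using assms(3)
proof (induction i)
  case 0 then show ?case by simp
next
  case (Suc i)
  have IH: "idx ! i = (if even i then idx ! 0 else 3 - idx ! 0)" using Suc by simp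
  have ne: "idx ! i \<noteq> idx ! Suc i"
    using assms(1) Suc.prems unfolding alternating_succ[symmetric] alternating_def by blast
  have l1: "i < length idx" "Suc i < length idx" "0 < length idx" using Suc.prems by auto
  have m1: "idx ! i \<in> {1,2}" using assms(2) nth_mem[OF l1(1)] by blast
  have m2: "idx ! Suc i \<in> {1,2}" using assms(2) nth_mem[OF l1(2)] by blast
  have m0: "idx ! 0 \<in> {1,2}" using assms(2) nth_mem[OF l1(3)] by blast
  have s: "idx ! Suc i = 3 - idx ! i" using m1 m2 ne by auto
  show ?case
  proof (cases "even i")
    case True then show ?thesis using IH s by simp
  next
    case False then show ?thesis using IH s m0 by auto
  qed
qed

locale setting =
  fixes tau tau' :: "ncp \<Rightarrow> complex" and A I K :: "ncp set" and Alg :: "nat \<Rightarrow> ncp set"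
  assumes closedA: "closedB A" and oneA: "pone \<in> A"
    and closedAlg: "i \<in> {1,2} \<Longrightarrow> closedB (Alg i)"
    and oneAlg: "i \<in> {1,2} \<Longrightarrow> pone \<in> Alg i"
    and AlgA: "i \<in> {1,2} \<Longrightarrow> Alg i \<subseteq> A"
    and tau_add: "p \<in> A \<Longrightarrow> q \<in> A \<Longrightarrow> tau (padd p q) = tau p + tau q"
    and tau_smult: "p \<in> A \<Longrightarrow> tau (psmult c p) = c * tau p"
    and tau_one: "tau pone = 1"
    and tau'_add: "p \<in> A \<Longrightarrow> q \<in> A \<Longrightarrow> tau' (padd p q) = tau' p + tau' q"
    and tau'_smult: "p \<in> A \<Longrightarrow> tau' (psmult c p) = c * tau' p"
    and I_ideal: "is_ideal A I"
    and tau_I: "p \<in> I \<Longrightarrow> tau p = 0"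
    and KA: "K \<subseteq> A" and oneK: "pone \<in> K" and mulK: "p \<in> K \<Longrightarrow> q \<in> K \<Longrightarrow> pmul p q \<in> K"
    and tau'_K: "p \<in> K \<Longrightarrow> tau' p = 0"
    and typeB: "free_typeB tau tau' Alg (\<lambda>i. I \<inter> Alg i) {1,2}"
    and decomp: "i \<in> {1,2} \<Longrightarrow> a \<in> Alg i \<Longrightarrow> \<exists>p q. a = padd p q \<and> p \<in> Alg i \<inter> K \<and> q \<in> Alg i \<inter> I"
begin

definition G :: "ncp \<Rightarrow> nat \<Rightarrow> bool" where
  "G x i \<longleftrightarrow> i \<in> {1,2} \<and> x \<in> Alg i \<and> tau x = 0"

lemma mulA: "p \<in> A \<Longrightarrow> q \<in> A \<Longrightarrow> pmul p q \<in> A"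
  using closedA by (simp add: closedB_def)
lemma addA: "p \<in> A \<Longrightarrow> q \<in> A \<Longrightarrow> padd p q \<in> A"
  using closedA by (simp add: closedB_def)
lemma smultA: "p \<in> A \<Longrightarrow> psmult c p \<in> A"
  using closedA by (simp add: closedB_def)

lemma pprodA: "set xs \<subseteq> A \<Longrightarrow> pprod xs \<in> A"
  by (induction xs) (auto simp: oneA mulA)

lemma pprodK: "set xs \<subseteq> K \<Longrightarrow> pprod xs \<in> K"
  by (induction xs) (auto simp: oneK mulK)

lemma IA: "I \<subseteq> A" using I_ideal by (simp add: is_ideal_def)

lemma mulI_left: "a \<in> A \<Longrightarrow> p \<in> I \<Longrightarrow> pmul a p \<in> I"
  using I_ideal by (simp add: is_ideal_def)
lemma mulI_right: "a \<in> A \<Longrightarrow> p \<in> I \<Longrightarrow> pmul p a \<in> I"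
  using I_ideal by (simp add: is_ideal_def)

lemma pprodI: "set xs \<subseteq> A \<Longrightarrow> i < length xs \<Longrightarrow> xs ! i \<in> I \<Longrightarrow> pprod xs \<in> I"
proof (induction xs arbitrary: i)
  case Nil then show ?case by simp
next
  case (Cons x xs)
  show ?case
  proof (cases i)
    case 0
    then show ?thesis using Cons.prems pprodA[of xs] mulI_right by auto
  next
    case (Suc j)
    then have "pprod xs \<in> I" using Cons by auto
    then show ?thesis using Cons.prems mulI_left by auto
  qed
qed

lemma G_A: "G x i \<Longrightarrow> x \<in> A"
  using AlgA by (auto simp: G_def)

lemma all2_G_A: "list_all2 G xs idx \<Longrightarrow> set xs \<subseteq> A"
  by (induction xs idx rule: list_all2_induct) (auto dest: G_A)

lemma all2_G_idx: "list_all2 G xs idx \<Longrightarrow> set idx \<subseteq> {1,2}"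
  by (induction xs idx rule: list_all2_induct) (auto simp: G_def)

lemma free0:
  assumes "xs \<noteq> []" "list_all2 G xs idx" "successively (\<noteq>) idx"
  shows "tau (pprod xs) = 0"
proof -
  have fw: "free_wrt tau Alg {1,2}" using typeB by (simp add: free_typeB_def)
  show ?thesis
    using fw[unfolded free_wrt_def, rule_format, of xs idx] assms all2_G_idx[OF assms(2)]
    by (auto simp: list_all2_conv_all_nth G_def alternating_succ)
qed

end



context setting begin

lemma pprod_snoc: "pprod (xs @ [a]) = pmul (pprod xs) a"
  by (simp add: pprod_append)

lemma FL:
  assumes "list_all2 G as ia" "list_all2 G bs ib" "h \<in> {1,2}" "successively (\<noteq>) (rev ia @ [h] @ ib)"
  shows "tau (pmul (pprod (rev as)) (pprod bs)) =
    (if length as = length bs then \<Prod>r<length as. tau (pmul (as ! r) (bs ! r)) else 0)"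
  using assms
proof (induction as arbitrary: ia bs ib h)
  case Nil
  then have ia: "ia = []" by simp
  show ?case
  proof (cases bs)
    case Nil then show ?thesis using tau_one by simp
  next
    case (Cons b bs')
    have "successively (\<noteq>) ib" using Nil.prems(4) ia by (auto simp: successively_Cons)
    then have "tau (pprod bs) = 0" using free0[of bs ib] Cons Nil.prems(2) by simp
    then show ?thesis using Cons by simp
  qed
next
  case (Cons a as')
  obtain i ia' where ia: "ia = i # ia'" using Cons.prems(1) by (cases ia) auto
  have Ga: "G a i" and Gas: "list_all2 G as' ia'" using Cons.prems(1) ia by auto
  show ?case
  proof (cases bs)
    case Nil
    then have ib: "ib = []" using Cons.prems(2) by simp
    have "successively (\<noteq>) (rev ia)" using Cons.prems(4)
      by (simp add: successively_append_iff)
    moreover have "list_all2 G (rev (a # as')) (rev ia)" using Cons.prems(1) by (simp only: list_all2_rev)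
    ultimately have "tau (pprod (rev (a # as'))) = 0" by (intro free0) auto
    then show ?thesis using Nil by simp
  next
    case (Cons b bs')
    obtain i2 ib' where ib: "ib = i2 # ib'" using Cons Cons.prems(2) by (cases ib) auto
    have Gb: "G b i2" and Gbs: "list_all2 G bs' ib'" using \<open>list_all2 G bs ib\<close> Cons ib by auto
    have succ: "successively (\<noteq>) (rev ia' @ [i, h, i2] @ ib')"
      using \<open>successively (\<noteq>) (rev ia @ [h] @ ib)\<close> ia ib by simp
    have hi: "i \<noteq> h" "h \<noteq> i2" using succ by (auto simp: successively_append_iff)
    have i12: "i \<in> {1,2}" "i2 \<in> {1,2}" using Ga Gb by (auto simp: G_def)
    have "i = i2" using hi i12 \<open>h \<in> {1,2}\<close> by auto
    then have succ': "successively (\<noteq>) (rev ia' @ [i] @ ib')"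
      using succ by (auto simp: successively_append_iff)
    define X where "X = pprod (rev as')"
    define Y where "Y = pprod bs'"
    have XA: "X \<in> A" unfolding X_def using all2_G_A[OF Gas] by (intro pprodA) auto
    have YA: "Y \<in> A" unfolding Y_def using all2_G_A[OF Gbs] by (intro pprodA) auto
    define c where "c = pmul a b"
    have aAlg: "a \<in> Alg i" and bAlg: "b \<in> Alg i" using Ga Gb \<open>i = i2\<close> by (auto simp: G_def)
    have cAlg: "c \<in> Alg i" using closedAlg[OF i12(1)] aAlg bAlg by (simp add: closedB_def c_def)
    have cA: "c \<in> A" using AlgA[OF i12(1)] cAlg by auto
    define c0 where "c0 = padd c (psmult (- tau c) pone)"
    have c0Alg: "c0 \<in> Alg i" using closedAlg[OF i12(1)] cAlg oneAlg[OF i12(1)]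
      by (simp add: closedB_def c0_def)
    have c0A: "c0 \<in> A" using AlgA[OF i12(1)] c0Alg by auto
    have tc0: "tau c0 = 0" unfolding c0_def
      using tau_add[OF cA smultA[OF oneA]] tau_smult[OF oneA] tau_one by simp
    have ceq: "c = padd c0 (psmult (tau c) pone)"
      by (auto simp: c0_def padd_def psmult_def fun_eq_iff)
    have "pmul (pprod (rev (a # as'))) (pprod bs) = pmul X (pmul c Y)"
      by (simp add: Cons X_def Y_def c_def pprod_snoc pmul_assoc)
    also have "\<dots> = padd (pmul X (pmul c0 Y)) (psmult (tau c) (pmul X Y))"
      by (subst ceq) (simp add: pmul_padd_left pmul_padd_right pmul_psmult_left pmul_psmult_right)
    finally have eq1: "pmul (pprod (rev (a # as'))) (pprod bs) =
        padd (pmul X (pmul c0 Y)) (psmult (tau c) (pmul X Y))" .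
    have z: "tau (pmul X (pmul c0 Y)) = 0"
    proof -
      have "pmul X (pmul c0 Y) = pprod (rev as' @ [c0] @ bs')"
        by (simp add: X_def Y_def pprod_append)
      moreover have "list_all2 G (rev as' @ [c0] @ bs') (rev ia' @ [i] @ ib')"
        using Gas Gbs c0Alg tc0 i12 by (auto simp: G_def list_all2_rev intro!: list_all2_appendI)
      ultimately show ?thesis using free0 succ' by auto
    qed
    have IH: "tau (pmul X Y) = (if length as' = length bs' then \<Prod>r<length as'. tau (pmul (as' ! r) (bs' ! r)) else 0)"
      unfolding X_def Y_def by (rule Cons.IH[OF Gas Gbs i12(1) succ'])
    have "tau (pmul (pprod (rev (a # as'))) (pprod bs)) = tau c * tau (pmul X Y)"
      unfolding eq1 using z
      by (simp add: tau_add[OF mulA[OF XA mulA[OF c0A YA]] smultA[OF mulA[OF XA YA]]] tau_smult[OF mulA[OF XA YA]])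
    also have "\<dots> = (if length (a # as') = length bs then \<Prod>r<length (a # as'). tau (pmul ((a # as') ! r) (bs ! r)) else 0)"
      unfolding IH using Cons by (simp add: prod.lessThan_Suc_shift c_def del: prod.lessThan_Suc)
    finally show ?thesis .
  qed
qed

end



lemma parity_rev:
  assumes "successively (\<noteq>) idx" "set idx \<subseteq> {1::nat,2}" "j0 < length idx" "j0 = length idx - Suc j0"
  shows "rev (take j0 idx) = drop (Suc j0) idx"
proof (rule nth_equalityI)
  show "length (rev (take j0 idx)) = length (drop (Suc j0) idx)" using assms by simp
  fix r assume "r < length (rev (take j0 idx))"
  then have r: "r < j0" using assms by simp
  have "rev (take j0 idx) ! r = idx ! (j0 - Suc r)"
    using r assms(3) by (simp add: rev_nth)
  also have "\<dots> = (if even (j0 - Suc r) then idx ! 0 else 3 - idx ! 0)"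
    using succ_parity[OF assms(1,2)] r assms(3) by simp
  also have "\<dots> = (if even (Suc j0 + r) then idx ! 0 else 3 - idx ! 0)"
  proof -
    have "even (j0 - Suc r) \<longleftrightarrow> even (Suc j0 + r)" using r by presburger
    then show ?thesis by simp
  qed
  also have "\<dots> = idx ! (Suc j0 + r)"
    using succ_parity[OF assms(1,2), of "Suc j0 + r"] r assms by simp
  also have "\<dots> = drop (Suc j0) idx ! r" using r assms by simp
  finally show "rev (take j0 idx) ! r = drop (Suc j0) idx ! r" .
qed

context setting begin

lemma TB:
  assumes len: "length xs = n" "length idx = n" and j0: "j0 < n"
    and succ: "successively (\<noteq>) idx" and idxs: "set idx \<subseteq> {1,2}"
    and Gj: "\<forall>j<n. j \<noteq> j0 \<longrightarrow> G (xs ! j) (idx ! j)"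
    and v: "xs ! j0 \<in> I \<inter> Alg (idx ! j0)"
  shows "tau' (pprod xs) = (if j0 = n - Suc j0 then
      (\<Prod>r<j0. tau (pmul (rev (take j0 xs) ! r) (drop (Suc j0) xs ! r))) * tau' (xs ! j0) else 0)"
proof -
  let ?as = "rev (take j0 xs)" and ?ia = "rev (take j0 idx)"
  let ?bs = "drop (Suc j0) xs" and ?ib = "drop (Suc j0) idx"
  have Gl: "list_all2 G (take j0 xs) (take j0 idx)"
    using Gj len j0 by (auto simp: list_all2_conv_all_nth)
  then have Gl': "list_all2 G ?as ?ia" by simp
  have Gr: "list_all2 G ?bs ?ib"
    using Gj len j0 by (auto simp: list_all2_conv_all_nth)
  have idxeq: "rev ?ia @ [idx ! j0] @ ?ib = idx"
    using j0 len by (simp add: id_take_nth_drop[symmetric])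
  have alt: "alternating (rev ?ia @ [idx ! j0] @ ?ib)"
    using succ idxeq alternating_succ by metis
  have j0i: "j0 < length idx" using j0 len by simp
  have h: "idx ! j0 \<in> {1,2}" using idxs nth_mem[OF j0i] by blast
  have s1: "set ?ia \<subseteq> {1,2}" using idxs set_take_subset[of j0 idx] by auto
  have s2: "set ?ib \<subseteq> {1,2}" using idxs set_drop_subset[of "Suc j0" idx] by auto
  have c1: "\<forall>r<length ?as. ?as ! r \<in> Alg (?ia ! r) \<and> tau (?as ! r) = 0"
    using Gl' by (auto simp: list_all2_conv_all_nth G_def)
  have c2: "\<forall>s<length ?bs. ?bs ! s \<in> Alg (?ib ! s) \<and> tau (?bs ! s) = 0"
    using Gr by (auto simp: list_all2_conv_all_nth G_def)
  have l1: "length ?ia = length ?as" "length ?ib = length ?bs"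
    using list_all2_lengthD[OF Gl'] list_all2_lengthD[OF Gr] by auto
  have vv: "xs ! j0 \<in> (\<lambda>i. I \<inter> Alg i) (idx ! j0)" using v by simp
  have eq: "tau' (pmul (pprod (rev ?as)) (pmul (xs ! j0) (pprod ?bs))) =
      (if length ?as = length ?bs \<and> ?ia = ?ib then (\<Prod>r<length ?as. tau (pmul (?as ! r) (?bs ! r))) * tau' (xs ! j0) else 0)"
    apply (rule typeB[unfolded free_typeB_def, THEN conjunct2, rule_format, where h = "idx ! j0" and ia = ?ia and ib = ?ib])
    using l1 s1 s2 h vv alt c1 c2 by (intro conjI; assumption?)
  have "pmul (pprod (rev ?as)) (pmul (xs ! j0) (pprod ?bs)) = pprod (take j0 xs @ [xs ! j0] @ ?bs)"
    by (simp add: pprod_append)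
  also have "\<dots> = pprod xs" using j0 len by (simp add: id_take_nth_drop[symmetric])
  finally have pe: "pmul (pprod (rev ?as)) (pmul (xs ! j0) (pprod ?bs)) = pprod xs" .
  have la: "length ?as = j0" "length ?bs = n - Suc j0" using len j0 by auto
  have "j0 = n - Suc j0 \<Longrightarrow> ?ia = ?ib"
    using parity_rev[OF succ idxs] len j0 by simp
  then show ?thesis using eq pe la by auto
qed

end



context setting begin

definition Fn :: "nat \<Rightarrow> ncp list \<Rightarrow> complex" where
  "Fn n xs = tau' (pprod xs) - (\<Sum>j<n. tau' (xs ! j) * tau (pprod (xs[j := pone])))"

lemma set_upd_A: "set xs \<subseteq> A \<Longrightarrow> w \<in> A \<Longrightarrow> set (xs[m := w]) \<subseteq> A"
  using set_update_subset_insert[of xs m w] by blast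

lemma Fn_lin:
  assumes len: "length xs = n" and xsA: "set xs \<subseteq> A" and m: "m < n" and u: "u \<in> A" and v: "v \<in> A"
  shows "Fn n (xs[m := padd u v]) = Fn n (xs[m := u]) + Fn n (xs[m := v])"
proof -
  have t1: "tau' (pprod (xs[m := padd u v])) = tau' (pprod (xs[m := u])) + tau' (pprod (xs[m := v]))"
    using pprod_upd_padd[of m xs u v] m len
      tau'_add[OF pprodA[OF set_upd_A[OF xsA u]] pprodA[OF set_upd_A[OF xsA v]]] by simp
  have t2: "tau' ((xs[m := padd u v]) ! j) * tau (pprod ((xs[m := padd u v])[j := pone])) =
      tau' ((xs[m := u]) ! j) * tau (pprod ((xs[m := u])[j := pone])) +
      tau' ((xs[m := v]) ! j) * tau (pprod ((xs[m := v])[j := pone]))" if j: "j < n" for j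
  proof (cases "j = m")
    case True
    then show ?thesis using m len tau'_add[OF u v] by (simp add: distrib_right)
  next
    case False
    have xA: "set (xs[j := pone]) \<subseteq> A" using set_upd_A[OF xsA oneA] .
    have sw: "(xs[m := w])[j := pone] = (xs[j := pone])[m := w]" for w
      using False by (simp add: list_update_swap)
    have "tau (pprod ((xs[j := pone])[m := padd u v])) =
        tau (pprod ((xs[j := pone])[m := u])) + tau (pprod ((xs[j := pone])[m := v]))"
      using pprod_upd_padd[of m "xs[j := pone]" u v] m len
        tau_add[OF pprodA[OF set_upd_A[OF xA u]] pprodA[OF set_upd_A[OF xA v]]] by simp
    then show ?thesis using False by (simp add: sw distrib_left)
  qed
  have "(\<Sum>j<n. tau' ((xs[m := padd u v]) ! j) * tau (pprod ((xs[m := padd u v])[j := pone]))) =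
      (\<Sum>j<n. tau' ((xs[m := u]) ! j) * tau (pprod ((xs[m := u])[j := pone]))) +
      (\<Sum>j<n. tau' ((xs[m := v]) ! j) * tau (pprod ((xs[m := v])[j := pone])))"
    by (simp add: t2 sum.distrib)
  then show ?thesis unfolding Fn_def using t1 by (simp add: algebra_simps)
qed

lemma main: "inf_free tau tau' Alg {1,2}"
  unfolding inf_free_def
proof (intro allI impI, elim conjE)
  fix as idx
  assume ne: "as \<noteq> []" and len: "length idx = length as" and idxs: "set idx \<subseteq> {1,2}"
    and alt: "alternating idx"
    and el: "\<forall>j<length as. as ! j \<in> Alg (idx ! j) \<and> tau (as ! j) = 0"
  define n where "n = length as"
  have succ: "successively (\<noteq>) idx" using alt alternating_succ by blast
  have idxj: "idx ! j \<in> {1,2}" if "j < n" for j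
  proof -
    have "j < length idx" using that len n_def by simp
    then show ?thesis using idxs nth_mem[of j idx] by blast
  qed
  have Gas: "G (as ! j) (idx ! j)" if "j < n" for j
    using el idxj[OF that] that n_def by (auto simp: G_def)
  have all2: "list_all2 G as idx"
    using Gas len n_def by (auto simp: list_all2_conv_all_nth)
  have asA: "set as \<subseteq> A" using all2_G_A[OF all2] .
  have part1: "tau (pprod as) = 0" using free0[OF ne all2 succ] .
  have ex: "\<forall>j. \<exists>pq. j < n \<longrightarrow> (as ! j = padd (fst pq) (snd pq) \<and> fst pq \<in> Alg (idx ! j) \<inter> K \<and> snd pq \<in> Alg (idx ! j) \<inter> I)"
  proof
    fix j
    show "\<exists>pq. j < n \<longrightarrow> (as ! j = padd (fst pq) (snd pq) \<and> fst pq \<in> Alg (idx ! j) \<inter> K \<and> snd pq \<in> Alg (idx ! j) \<inter> I)"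
    proof (cases "j < n")
      case True
      then obtain p q where "as ! j = padd p q \<and> p \<in> Alg (idx ! j) \<inter> K \<and> q \<in> Alg (idx ! j) \<inter> I"
        using decomp[OF idxj[OF True]] el n_def by blast
      then show ?thesis by (intro exI[of _ "(p,q)"]) simp
    qed simp
  qed
  obtain PQ where PQ: "\<forall>j. j < n \<longrightarrow> (as ! j = padd (fst (PQ j)) (snd (PQ j)) \<and> fst (PQ j) \<in> Alg (idx ! j) \<inter> K \<and> snd (PQ j) \<in> Alg (idx ! j) \<inter> I)"
    using choice[OF ex] by blast
  define P where "P j = fst (PQ j)" for j
  define Q where "Q j = snd (PQ j)" for j
  have aPQ: "as ! j = padd (P j) (Q j)" and PAlg: "P j \<in> Alg (idx ! j)" and PK: "P j \<in> K"
    and QAlg: "Q j \<in> Alg (idx ! j)" and QI: "Q j \<in> I" if "j < n" for j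
    using PQ that by (auto simp: P_def Q_def)
  have PA: "P j \<in> A" if "j < n" for j using PK[OF that] KA by auto
  have QA: "Q j \<in> A" if "j < n" for j using QI[OF that] IA by auto
  have tQ: "tau (Q j) = 0" if "j < n" for j using tau_I QI that by blast
  have tP: "tau (P j) = 0" if "j < n" for j
    using tau_add[OF PA[OF that] QA[OF that]] aPQ[OF that] tQ[OF that] el that n_def by auto
  have GP: "G (P j) (idx ! j)" if "j < n" for j using PAlg tP idxj that by (auto simp: G_def)
  have GQ: "G (Q j) (idx ! j)" if "j < n" for j using QAlg tQ idxj that by (auto simp: G_def)
  have t'P: "tau' (P j) = 0" if "j < n" for j using tau'_K PK that by blast
  have t'Q: "tau' (Q j) = tau' (as ! j)" if "j < n" for j
    using tau'_add[OF PA[OF that] QA[OF that]] aPQ[OF that] t'P[OF that] by simp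
  define L where "L S m = map (\<lambda>j. if j \<in> S then Q j else if j < m then P j else as ! j) [0..<n]" for S m
  have Llen: "length (L S m) = n" for S m by (simp add: L_def)
  have Lnth: "L S m ! j = (if j \<in> S then Q j else if j < m then P j else as ! j)" if "j < n" for S m j
    using that by (simp add: L_def)
  have LA: "set (L S m) \<subseteq> A" for S m
  proof
    fix x assume "x \<in> set (L S m)"
    then obtain j where j: "j < n" "x = L S m ! j" using Llen by (metis in_set_conv_nth)
    show "x \<in> A" using j Lnth[OF j(1)] PA QA asA nth_mem[of j as] n_def by auto
  qed
  have base: "Fn n (L S n) = 0" if S: "S \<subseteq> {..<n}" for S
  proof -
    define xs where "xs = L S n"
    have xlen: "length xs = n" by (simp add: xs_def Llen)
    have xnth: "xs ! j = (if j \<in> S then Q j else P j)" if "j < n" for j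
      using Lnth[OF that] that by (simp add: xs_def)
    have xA: "set xs \<subseteq> A" using LA xs_def by simp
    have ilen: "length idx = n" using len n_def by simp
    show ?thesis
    proof (cases "S = {}")
      case True
      have "set xs \<subseteq> K"
      proof
        fix x assume "x \<in> set xs"
        then obtain j where j: "j < n" "x = xs ! j" using xlen by (metis in_set_conv_nth)
        then show "x \<in> K" using xnth[OF j(1)] True PK by simp
      qed
      then have "tau' (pprod xs) = 0" using tau'_K pprodK by blast
      moreover have "(\<Sum>j<n. tau' (xs ! j) * tau (pprod (xs[j := pone]))) = 0"
        by (rule sum.neutral) (use xnth True t'P in auto)
      ultimately show ?thesis by (simp add: Fn_def xs_def)
    next
      case False
      define j0 where "j0 = Min S"
      have finS: "finite S" using S finite_subset by blast
      have j0S: "j0 \<in> S" using Min_in[OF finS False] j0_def by simp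
      have j0n: "j0 < n" using j0S S by auto
      have j0min: "j0 \<le> j" if "j \<in> S" for j using Min_le[OF finS that] j0_def by simp
      have Gj: "\<forall>j<n. j \<noteq> j0 \<longrightarrow> G (xs ! j) (idx ! j)"
        using xnth GP GQ by auto
      have v: "xs ! j0 \<in> I \<inter> Alg (idx ! j0)" using xnth[OF j0n] j0S QI[OF j0n] QAlg[OF j0n] by simp
      note tb = TB[OF xlen ilen j0n succ idxs Gj v]
      show ?thesis
      proof (cases "S = {j0}")
        case True
        have "(\<Sum>j<n. tau' (xs ! j) * tau (pprod (xs[j := pone]))) =
            tau' (xs ! j0) * tau (pprod (xs[j0 := pone])) + (\<Sum>j\<in>{..<n} - {j0}. tau' (xs ! j) * tau (pprod (xs[j := pone])))"
          by (subst sum.remove[of "{..<n}" j0]) (use j0n in auto)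
        also have "(\<Sum>j\<in>{..<n} - {j0}. tau' (xs ! j) * tau (pprod (xs[j := pone]))) = 0"
          by (rule sum.neutral) (use xnth True t'P in auto)
        finally have sumeq: "(\<Sum>j<n. tau' (xs ! j) * tau (pprod (xs[j := pone]))) =
            tau' (xs ! j0) * tau (pprod (xs[j0 := pone]))" by simp
        have pp: "pprod (xs[j0 := pone]) = pmul (pprod (rev (rev (take j0 xs)))) (pprod (drop (Suc j0) xs))"
          using pprod_upd_pone[of j0 xs] j0n xlen by (simp add: pprod_append)
        have Gl: "list_all2 G (take j0 xs) (take j0 idx)"
          using Gj xlen ilen j0n by (auto simp: list_all2_conv_all_nth)
        then have Gl': "list_all2 G (rev (take j0 xs)) (rev (take j0 idx))" by simp
        have Gr: "list_all2 G (drop (Suc j0) xs) (drop (Suc j0) idx)"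
          using Gj xlen ilen j0n by (auto simp: list_all2_conv_all_nth)
        have h: "idx ! j0 \<in> {1,2}" using idxj[OF j0n] .
        have idxeq: "rev (rev (take j0 idx)) @ [idx ! j0] @ drop (Suc j0) idx = idx"
          using j0n ilen by (simp add: id_take_nth_drop[symmetric])
        have fl: "tau (pprod (xs[j0 := pone])) =
            (if j0 = n - Suc j0 then \<Prod>r<j0. tau (pmul (rev (take j0 xs) ! r) (drop (Suc j0) xs ! r)) else 0)"
          unfolding pp using FL[OF Gl' Gr h] succ idxeq xlen j0n by simp
        show ?thesis unfolding Fn_def xs_def[symmetric] sumeq fl tb by simp
      next
        case False
        then obtain j1 where j1: "j1 \<in> S" "j1 \<noteq> j0" using j0S by blast
        have j01: "j0 < j1" using j0min[OF j1(1)] j1(2) by simp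
        have j1n: "j1 < n" using j1 S by auto
        have z1: "tau' (pprod xs) = 0"
        proof (cases "j0 = n - Suc j0")
          case True
          define r where "r = j1 - Suc j0"
          have r: "r < j0" using True j01 j1n r_def by simp
          have "drop (Suc j0) xs ! r = xs ! j1" using r_def j01 j1n xlen by simp
          then have "drop (Suc j0) xs ! r \<in> I" using xnth[OF j1n] j1 QI[OF j1n] by simp
          moreover have "rev (take j0 xs) ! r \<in> A"
          proof -
            have "rev (take j0 xs) ! r \<in> set (rev (take j0 xs))" using r j0n xlen by (intro nth_mem) simp
            also have "\<dots> \<subseteq> set xs" by (simp add: set_take_subset)
            finally show ?thesis using xA by blast
          qed
          ultimately have "tau (pmul (rev (take j0 xs) ! r) (drop (Suc j0) xs ! r)) = 0"
            using mulI_left tau_I by blast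
          then have "(\<Prod>r<j0. tau (pmul (rev (take j0 xs) ! r) (drop (Suc j0) xs ! r))) = 0"
            using r by (intro prod_zero) auto
          then show ?thesis using tb True by simp
        next
          case False
          then show ?thesis using tb by simp
        qed
        have z2: "tau (pprod (xs[j := pone])) = 0" if j: "j < n" for j
        proof -
          obtain k where k: "k \<in> S" "k \<noteq> j"
            using j0S j1 by (cases "j = j0") auto
          have kn: "k < n" using k S by auto
          have "(xs[j := pone]) ! k \<in> I" using k kn xnth[OF kn] QI[OF kn] by simp
          then have "pprod (xs[j := pone]) \<in> I"
            using pprodI[OF set_upd_A[OF xA oneA]] kn xlen by simp
          then show ?thesis using tau_I by blast
        qed
        have "(\<Sum>j<n. tau' (xs ! j) * tau (pprod (xs[j := pone]))) = 0"
          by (rule sum.neutral) (use z2 in auto)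
        then show ?thesis using z1 by (simp add: Fn_def xs_def)
      qed
    qed
  qed
  have step: "\<forall>S\<subseteq>{..<m}. Fn n (L S m) = 0"
    if m: "m < n" and IH: "\<forall>S\<subseteq>{..<Suc m}. Fn n (L S (Suc m)) = 0" for m
  proof (intro allI impI)
    fix S assume S: "S \<subseteq> {..<m}"
    then have mS: "m \<notin> S" by auto
    have e1: "L S m = (L S (Suc m))[m := padd (P m) (Q m)]"
      by (rule nth_equalityI) (use m mS aPQ[OF m] in \<open>auto simp: Llen Lnth nth_list_update\<close>)
    have e2: "(L S (Suc m))[m := P m] = L S (Suc m)"
      by (rule nth_equalityI) (use m mS in \<open>auto simp: Llen Lnth nth_list_update\<close>)
    have e3: "(L S (Suc m))[m := Q m] = L (insert m S) (Suc m)"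
      by (rule nth_equalityI) (use m mS in \<open>auto simp: Llen Lnth nth_list_update\<close>)
    have "Fn n (L S m) = Fn n ((L S (Suc m))[m := P m]) + Fn n ((L S (Suc m))[m := Q m])"
      unfolding e1 by (rule Fn_lin[OF Llen LA m PA[OF m] QA[OF m]])
    also have "\<dots> = 0"
    proof -
      have "S \<subseteq> {..<Suc m}" "insert m S \<subseteq> {..<Suc m}" using S by auto
      then show ?thesis unfolding e2 e3 using IH by simp
    qed
    finally show "Fn n (L S m) = 0" .
  qed
  have "\<forall>S\<subseteq>{..<0}. Fn n (L S 0) = 0"
  proof (rule inc_induct[of 0 n])
    show "\<forall>S\<subseteq>{..<n}. Fn n (L S n) = 0" using base by blast
  next
    fix m assume "0 \<le> m" "m < n" "\<forall>S\<subseteq>{..<Suc m}. Fn n (L S (Suc m)) = 0"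
    then show "\<forall>S\<subseteq>{..<m}. Fn n (L S m) = 0" using step by blast
  qed simp
  then have F0: "Fn n (L {} 0) = 0" by blast
  have "L {} 0 = as"
    by (rule nth_equalityI) (auto simp: Llen Lnth n_def)
  with F0 have Fas: "Fn n as = 0" by simp
  have rhs: "tau (pprod (as[j := psmult (tau' (as ! j)) pone])) = tau' (as ! j) * tau (pprod (as[j := pone]))"
    if "j < n" for j
    using pprod_upd_psmult[of j as "tau' (as ! j)" pone] that n_def
      tau_smult[OF pprodA[OF set_upd_A[OF asA oneA]]] by simp
  have "tau' (pprod as) = (\<Sum>j<length as. tau (pprod (as[j := psmult (tau' (as ! j)) pone])))"
    using Fas rhs unfolding Fn_def n_def by simp
  then show "tau (pprod as) = 0 \<and> tau' (pprod as) = (\<Sum>j<length as. tau (pprod (as[j := psmult (tau' (as ! j)) pone])))"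
    using part1 by simp
qed

end

theorem lemma3p7:
  fixes k k' l l' :: nat and t t' :: "word \<Rightarrow> complex"
    and A A1 A2 I1 I2 I :: "ncp set"
  assumes "k' \<le> k" and "l' \<le> l"
    and "A = polys (Inl ` {..<k} \<union> Inr ` {..<l})"
    and "A1 = polys (Inl ` {..<k})"
    and "A2 = polys (Inr ` {..<l})"
    and "I1 = gen_ideal A1 (var ` Inl ` {..<k'})"
    and "I2 = gen_ideal A2 (var ` Inr ` {..<l'})"
    and "I = gen_ideal A (I1 \<union> I2)"
    and "t [] = 1"
    and "t' [] = 0"
    and "\<forall>p\<in>I. lin t p = 0"
    and "\<forall>p\<in>polys (Inl ` {k'..<k} \<union> Inr ` {l'..<l}). lin t' p = 0"
    and "free_typeB (lin t) (lin t') (\<lambda>i::nat. if i = 1 then A1 else A2)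
           (\<lambda>i. if i = 1 then I \<inter> A1 else I \<inter> A2) {1, 2}"
  shows "inf_free (lin t) (lin t') (\<lambda>i::nat. if i = 1 then A1 else A2) {1, 2}"
proof -
  note kk = assms(1) and ll = assms(2) and Adef = assms(3) and A1def = assms(4) and A2def = assms(5)
    and I1def = assms(6) and I2def = assms(7) and Idef = assms(8) and t1 = assms(9)
    and tI = assms(11) and t'K = assms(12) and tB = assms(13)
  define K where "K = polys (Inl ` {k'..<k} \<union> Inr ` {l'..<l})"
  define Alg where "Alg = (\<lambda>i::nat. if i = 1 then A1 else A2)"
  have A1A: "A1 \<subseteq> A" unfolding A1def Adef by (rule polys_mono) auto
  have A2A: "A2 \<subseteq> A" unfolding A2def Adef by (rule polys_mono) auto
  have v1: "var ` Inl ` {..<k'} \<subseteq> A1" unfolding A1def using kk by (auto intro!: polys_var)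
  have v2: "var ` Inr ` {..<l'} \<subseteq> A2" unfolding A2def using ll by (auto intro!: polys_var)
  have I1A1: "I1 \<subseteq> A1" unfolding I1def using gen_ideal_props(3)[OF _ v1] A1def closedB_polys by simp
  have I2A2: "I2 \<subseteq> A2" unfolding I2def using gen_ideal_props(3)[OF _ v2] A2def closedB_polys by simp
  have cA: "closedB A" using Adef closedB_polys by simp
  have IU: "I1 \<union> I2 \<subseteq> A" using I1A1 I2A2 A1A A2A by blast
  have Iid: "is_ideal A I" unfolding Idef by (rule gen_ideal_props(1)[OF cA IU])
  have I12: "I1 \<union> I2 \<subseteq> I" unfolding Idef by (rule gen_ideal_props(2)[OF cA IU])
  have KA: "K \<subseteq> A" unfolding K_def Adef by (rule polys_mono) auto
  have finA: "p \<in> A \<Longrightarrow> finite (supp p)" for p using Adef polys_finite by blast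
  have V: "(\<lambda>i. if i = 1 then I \<inter> A1 else I \<inter> A2) = (\<lambda>i. I \<inter> Alg i)"
    by (auto simp: Alg_def fun_eq_iff)
  interpret S: setting "lin t" "lin t'" A I K Alg
  proof
    show "closedB A" by (rule cA)
    show "pone \<in> A" using Adef by simp
    show "closedB (Alg i)" if "i \<in> {1,2}" for i using A1def A2def closedB_polys by (simp add: Alg_def)
    show "pone \<in> Alg i" if "i \<in> {1,2}" for i using A1def A2def by (simp add: Alg_def)
    show "Alg i \<subseteq> A" if "i \<in> {1,2}" for i using A1A A2A by (simp add: Alg_def)
    show "lin t (padd p q) = lin t p + lin t q" if "p \<in> A" "q \<in> A" for p q
      using lin_padd finA that by blast
    show "lin t (psmult c p) = c * lin t p" if "p \<in> A" for c p using lin_psmult finA that by blast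
    show "lin t pone = 1" using lin_pone t1 by simp
    show "lin t' (padd p q) = lin t' p + lin t' q" if "p \<in> A" "q \<in> A" for p q
      using lin_padd finA that by blast
    show "lin t' (psmult c p) = c * lin t' p" if "p \<in> A" for c p using lin_psmult finA that by blast
    show "is_ideal A I" by (rule Iid)
    show "lin t p = 0" if "p \<in> I" for p using tI that by blast
    show "K \<subseteq> A" by (rule KA)
    show "pone \<in> K" unfolding K_def by simp
    show "pmul p q \<in> K" if "p \<in> K" "q \<in> K" for p q using that polys_pmul unfolding K_def by blast
    show "lin t' p = 0" if "p \<in> K" for p using t'K that K_def by blast
    show "free_typeB (lin t) (lin t') Alg (\<lambda>i. I \<inter> Alg i) {1,2}" using tB V by (simp add: Alg_def)
    show "\<exists>p q. a = padd p q \<and> p \<in> Alg i \<inter> K \<and> q \<in> Alg i \<inter> I" if i: "i \<in> {1,2}" and a: "a \<in> Alg i" for i a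
    proof (cases "i = 1")
      case True
      then have aA1: "a \<in> polys (Inl ` {..<k})" using a A1def by (simp add: Alg_def)
      obtain p q where pq: "a = padd p q" "p \<in> polys (Inl ` {..<k} - Inl ` {..<k'})"
          "q \<in> gen_ideal (polys (Inl ` {..<k})) (var ` Inl ` {..<k'})"
      proof -
        have "Inl ` {..<k'} \<subseteq> (Inl ` {..<k} :: gen set)" using kk by auto
        then show ?thesis using decompose[OF aA1] that by blast
      qed
      have "p \<in> A1" using pq(2) polys_mono[of "Inl ` {..<k} - Inl ` {..<k'}" "Inl ` {..<k}"] A1def by blast
      moreover have "p \<in> K" using pq(2) polys_mono[of "Inl ` {..<k} - Inl ` {..<k'}" "Inl ` {k'..<k} \<union> Inr ` {l'..<l}"]
        unfolding K_def by force
      moreover have "q \<in> I1" using pq(3) I1def A1def by simp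
      ultimately show ?thesis using pq(1) I1A1 I12 True
        by (intro exI[of _ p] exI[of _ q]) (auto simp: Alg_def)
    next
      case False
      then have aA2: "a \<in> polys (Inr ` {..<l})" using a A2def by (simp add: Alg_def)
      obtain p q where pq: "a = padd p q" "p \<in> polys (Inr ` {..<l} - Inr ` {..<l'})"
          "q \<in> gen_ideal (polys (Inr ` {..<l})) (var ` Inr ` {..<l'})"
      proof -
        have "Inr ` {..<l'} \<subseteq> (Inr ` {..<l} :: gen set)" using ll by auto
        then show ?thesis using decompose[OF aA2] that by blast
      qed
      have "p \<in> A2" using pq(2) polys_mono[of "Inr ` {..<l} - Inr ` {..<l'}" "Inr ` {..<l}"] A2def by blast
      moreover have "p \<in> K" using pq(2) polys_mono[of "Inr ` {..<l} - Inr ` {..<l'}" "Inl ` {k'..<k} \<union> Inr ` {l'..<l}"]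
        unfolding K_def by force
      moreover have "q \<in> I2" using pq(3) I2def A2def by simp
      ultimately show ?thesis using pq(1) I2A2 I12 False
        by (intro exI[of _ p] exI[of _ q]) (auto simp: Alg_def)
    qed
  qed
  show ?thesis using S.main by (simp add: Alg_def)
qed

end
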